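(* Let $A,B,C$ be dendrons. If $AB=AC$, then $B=C$.
   Context: A finite dynamical system (FDS) is a function $A:S_A\to S_A$ on a finite set, considered up to isomorphism of functional graphs (arcs $x\to A(x)$). The product $AB$ acts on $S_A\times S_B$ by $(a,b)\mapsto(A(a),B(b))$. A dendron is an FDS whose functional graph is connected and which has a fixpoint (a state $s$ with $A(s)=s$). *)

theory Defs
  imports Main
begin

text \<open>A finite dynamical system (FDS) is represented by a finite carrier set S
  and a function f mapping S into S (values of f outside S are irrelevant).\<close>

definition fds :: "'a set \<Rightarrow> ('a \<Rightarrow> 'a) \<Rightarrow> bool" where
  "fds S f \<longleftrightarrow> finite S \<and> (\<forall>x\<in>S. f x \<in> S)"

definition fds_arcs :: "'a set \<Rightarrow> ('a \<Rightarrow> 'a) \<Rightarrow> ('a \<times> 'a) set" where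
  "fds_arcs S f = {(x, f x) | x. x \<in> S}"

definition fds_connected :: "'a set \<Rightarrow> ('a \<Rightarrow> 'a) \<Rightarrow> bool" where
  "fds_connected S f \<longleftrightarrow>
     (\<forall>x\<in>S. \<forall>y\<in>S. (x, y) \<in> (fds_arcs S f \<union> (fds_arcs S f)\<inverse>)\<^sup>*)"

definition dendron :: "'a set \<Rightarrow> ('a \<Rightarrow> 'a) \<Rightarrow> bool" where
  "dendron S f \<longleftrightarrow> fds S f \<and> fds_connected S f \<and> (\<exists>s\<in>S. f s = s)"

definition fds_iso :: "'a set \<Rightarrow> ('a \<Rightarrow> 'a) \<Rightarrow> 'b set \<Rightarrow> ('b \<Rightarrow> 'b) \<Rightarrow> bool" where
  "fds_iso S f T g \<longleftrightarrow> (\<exists>h. bij_betw h S T \<and> (\<forall>x\<in>S. h (f x) = g (h x)))"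

definition fds_prod_set :: "'a set \<Rightarrow> 'b set \<Rightarrow> ('a \<times> 'b) set" where
  "fds_prod_set S T = S \<times> T"

definition fds_prod :: "('a \<Rightarrow> 'a) \<Rightarrow> ('b \<Rightarrow> 'b) \<Rightarrow> ('a \<times> 'b \<Rightarrow> 'a \<times> 'b)" where
  "fds_prod f g = map_prod f g"

end

theory Submission
  imports Defs "HOL-Library.FuncSet"
begin


definition fhom :: "'x set \<Rightarrow> ('x \<Rightarrow> 'x) \<Rightarrow> 'b set \<Rightarrow> ('b \<Rightarrow> 'b) \<Rightarrow> ('x \<Rightarrow> 'b) set" where
  "fhom S f T g = {h \<in> S \<rightarrow>\<^sub>E T. \<forall>x\<in>S. h (f x) = g (h x)}"

definition finjhom :: "'x set \<Rightarrow> ('x \<Rightarrow> 'x) \<Rightarrow> 'b set \<Rightarrow> ('b \<Rightarrow> 'b) \<Rightarrow> ('x \<Rightarrow> 'b) set" where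
  "finjhom S f T g = {h \<in> fhom S f T g. inj_on h S}"

definition kern :: "'x set \<Rightarrow> ('x \<Rightarrow> 'b) \<Rightarrow> ('x \<times> 'x) set" where
  "kern S h = {(x, y). x \<in> S \<and> y \<in> S \<and> h x = h y}"

definition congs :: "'x set \<Rightarrow> ('x \<Rightarrow> 'x) \<Rightarrow> ('x \<times> 'x) set set" where
  "congs S f = {E. equiv S E \<and> (\<forall>x y. (x, y) \<in> E \<longrightarrow> (f x, f y) \<in> E)}"

definition Rp :: "('x \<times> 'x) set \<Rightarrow> 'x \<Rightarrow> 'x" where
  "Rp E x = (SOME y. y \<in> E `` {x})"

lemma Rp_rel: assumes "equiv S E" "x \<in> S" shows "(x, Rp E x) \<in> E"
proof -
  have "x \<in> E `` {x}" using assms by (meson Image_singleton_iff equiv_def refl_onD)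
  then have "Rp E x \<in> E `` {x}" unfolding Rp_def by (rule someI)
  then show ?thesis by simp
qed

lemma Rp_eq: assumes "equiv S E" "(x, y) \<in> E" shows "Rp E x = Rp E y"
proof -
  have "E `` {x} = E `` {y}" by (rule equiv_class_eq[OF assms])
  then show ?thesis unfolding Rp_def by simp
qed

lemma Rp_in: assumes "equiv S E" "x \<in> S" shows "Rp E x \<in> S"
proof -
  have "E \<subseteq> S \<times> S" by (rule equiv_type[OF assms(1)])
  then show ?thesis using Rp_rel[OF assms] by blast
qed

lemma Rp_idem: assumes "equiv S E" "x \<in> S" shows "Rp E (Rp E x) = Rp E x"
  using Rp_eq[OF assms(1) Rp_rel[OF assms]] by simp

lemma Rp_back: assumes "equiv S E" "x \<in> S" "y \<in> S" "Rp E x = Rp E y" shows "(x, y) \<in> E"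
proof -
  have a: "(x, Rp E x) \<in> E" by (rule Rp_rel[OF assms(1,2)])
  have "(y, Rp E y) \<in> E" by (rule Rp_rel[OF assms(1,3)])
  then have b: "(Rp E x, y) \<in> E" using assms(1,4) by (simp add: equiv_def symD)
  have "trans E" using assms(1) by (simp add: equiv_def)
  then show ?thesis using a b by (rule transD)
qed

lemma fiber_bij:
  assumes "fds S f" "E \<in> congs S f"
  shows "bij_betw (\<lambda>h. restrict h (Rp E ` S)) {h \<in> fhom S f T g. kern S h = E}
           (finjhom (Rp E ` S) (Rp E \<circ> f) T g)"
proof (rule bij_betw_byWitness[where f' = "\<lambda>h'. restrict (h' \<circ> Rp E) S"])
  have eq: "equiv S E" and cg: "\<And>x y. (x, y) \<in> E \<Longrightarrow> (f x, f y) \<in> E"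
    using assms(2) unfolding congs_def by auto
  have fS: "\<And>x. x \<in> S \<Longrightarrow> f x \<in> S" using assms(1) unfolding fds_def by auto
  have ES: "E \<subseteq> S \<times> S" using eq by (simp add: equiv_type)
  let ?R = "Rp E ` S"
  have RS: "?R \<subseteq> S" using Rp_in[OF eq] by auto
  have Rid: "\<And>r. r \<in> ?R \<Longrightarrow> Rp E r = r" using Rp_idem[OF eq] by auto
  show "\<forall>h\<in>{h \<in> fhom S f T g. kern S h = E}. restrict (restrict h ?R \<circ> Rp E) S = h"
  proof
    fix h assume h: "h \<in> {h \<in> fhom S f T g. kern S h = E}"
    show "restrict (restrict h ?R \<circ> Rp E) S = h"
    proof
      fix x show "restrict (restrict h ?R \<circ> Rp E) S x = h x"
      proof (cases "x \<in> S")
        case True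
        then have "(x, Rp E x) \<in> kern S h" using h Rp_rel[OF eq] by auto
        then show ?thesis using True by (auto simp: kern_def)
      next
        case False
        then show ?thesis using h by (auto simp: fhom_def)
      qed
    qed
  qed
  show "\<forall>h'\<in>finjhom ?R (Rp E \<circ> f) T g. restrict (restrict (h' \<circ> Rp E) S) ?R = h'"
  proof
    fix h' assume h': "h' \<in> finjhom ?R (Rp E \<circ> f) T g"
    show "restrict (restrict (h' \<circ> Rp E) S) ?R = h'"
    proof
      fix x show "restrict (restrict (h' \<circ> Rp E) S) ?R x = h' x"
      proof (cases "x \<in> ?R")
        case True
        then have "x \<in> S" "Rp E x = x" using RS Rid by blast+
        then show ?thesis using True by simp
      next
        case False
        then show ?thesis using h' by (auto simp: finjhom_def fhom_def)
      qed
    qed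
  qed
  show "(\<lambda>h. restrict h ?R) ` {h \<in> fhom S f T g. kern S h = E} \<subseteq> finjhom ?R (Rp E \<circ> f) T g"
  proof
    fix k assume "k \<in> (\<lambda>h. restrict h ?R) ` {h \<in> fhom S f T g. kern S h = E}"
    then obtain h where h: "h \<in> fhom S f T g" "kern S h = E" and k: "k = restrict h ?R" by auto
    have "k \<in> ?R \<rightarrow>\<^sub>E T" using h(1) RS k by (auto simp: fhom_def)
    moreover have "\<forall>r\<in>?R. k ((Rp E \<circ> f) r) = g (k r)"
    proof
      fix r assume r: "r \<in> ?R"
      then have rS: "r \<in> S" using RS by auto
      have "(f r, Rp E (f r)) \<in> kern S h" using h(2) Rp_rel[OF eq fS[OF rS]] by auto
      then have "h (Rp E (f r)) = h (f r)" by (auto simp: kern_def)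
      also have "\<dots> = g (h r)" using h(1) rS by (auto simp: fhom_def)
      finally show "k ((Rp E \<circ> f) r) = g (k r)" using k r rS fS by auto
    qed
    moreover have "inj_on k ?R"
    proof
      fix r1 r2 assume r: "r1 \<in> ?R" "r2 \<in> ?R" "k r1 = k r2"
      then have "(r1, r2) \<in> kern S h" using RS k by (auto simp: kern_def)
      then have "Rp E r1 = Rp E r2" using h(2) Rp_eq[OF eq] by auto
      then show "r1 = r2" using Rid[OF r(1)] Rid[OF r(2)] by simp
    qed
    ultimately show "k \<in> finjhom ?R (Rp E \<circ> f) T g" by (auto simp: finjhom_def fhom_def)
  qed
  show "(\<lambda>h'. restrict (h' \<circ> Rp E) S) ` finjhom ?R (Rp E \<circ> f) T g \<subseteq> {h \<in> fhom S f T g. kern S h = E}"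
  proof
    fix k assume "k \<in> (\<lambda>h'. restrict (h' \<circ> Rp E) S) ` finjhom ?R (Rp E \<circ> f) T g"
    then obtain h' where h': "h' \<in> finjhom ?R (Rp E \<circ> f) T g" and k: "k = restrict (h' \<circ> Rp E) S"
      by auto
    have h'T: "\<And>r. r \<in> ?R \<Longrightarrow> h' r \<in> T" using h' by (auto simp: finjhom_def fhom_def)
    have h'h: "\<And>r. r \<in> ?R \<Longrightarrow> h' (Rp E (f r)) = g (h' r)" using h' by (auto simp: finjhom_def fhom_def)
    have h'i: "inj_on h' ?R" using h' by (auto simp: finjhom_def)
    have "k \<in> S \<rightarrow>\<^sub>E T"
    proof -
      have "\<And>x. x \<in> S \<Longrightarrow> k x \<in> T" using k h'T by simp
      moreover have "\<And>x. x \<notin> S \<Longrightarrow> k x = undefined" using k by simp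
      ultimately show ?thesis by (simp add: PiE_iff extensional_def)
    qed
    moreover have "\<forall>x\<in>S. k (f x) = g (k x)"
    proof
      fix x assume x: "x \<in> S"
      have "(Rp E x, x) \<in> E" using Rp_rel[OF eq x] eq by (meson equiv_def symD)
      then have "(f (Rp E x), f x) \<in> E" by (rule cg)
      then have "Rp E (f (Rp E x)) = Rp E (f x)" using Rp_eq[OF eq] by auto
      moreover have "h' (Rp E (f (Rp E x))) = g (h' (Rp E x))" using h'h x by auto
      moreover have "k (f x) = h' (Rp E (f x))" using k fS[OF x] by simp
      moreover have "k x = h' (Rp E x)" using k x by simp
      ultimately show "k (f x) = g (k x)" by simp
    qed
    moreover have "kern S k = E"
    proof
      show "kern S k \<subseteq> E"
      proof
        fix p assume p: "p \<in> kern S k"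
        then obtain x y where xy: "p = (x, y)" "x \<in> S" "y \<in> S" "k x = k y" by (auto simp: kern_def)
        then have "h' (Rp E x) = h' (Rp E y)" using k by auto
        then have "Rp E x = Rp E y" using h'i xy by (auto dest: inj_onD)
        then show "p \<in> E" using Rp_back[OF eq] xy by auto
      qed
      show "E \<subseteq> kern S k"
      proof
        fix p assume p: "p \<in> E"
        then obtain x y where xy: "p = (x, y)" "x \<in> S" "y \<in> S" using ES by auto
        then have "Rp E x = Rp E y" using Rp_eq[OF eq] p by auto
        then show "p \<in> kern S k" using xy k by (auto simp: kern_def)
      qed
    qed
    ultimately show "k \<in> {h \<in> fhom S f T g. kern S h = E}" by (auto simp: fhom_def)
  qed
qed



lemma finite_fhom: "finite S \<Longrightarrow> finite T \<Longrightarrow> finite (fhom S f T g)"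
proof -
  assume "finite S" "finite T"
  then have "finite (S \<rightarrow>\<^sub>E T)" by (simp add: finite_PiE)
  moreover have "fhom S f T g \<subseteq> S \<rightarrow>\<^sub>E T" unfolding fhom_def by blast
  ultimately show ?thesis by (rule rev_finite_subset)
qed

lemma finite_finjhom: "finite S \<Longrightarrow> finite T \<Longrightarrow> finite (finjhom S f T g)"
  unfolding finjhom_def by (simp add: finite_fhom)

lemma kern_in_congs:
  assumes "fds S f" "h \<in> fhom S f T g"
  shows "kern S h \<in> congs S f"
proof -
  have fS: "\<And>x. x \<in> S \<Longrightarrow> f x \<in> S" using assms(1) unfolding fds_def by auto
  have hh: "\<And>x. x \<in> S \<Longrightarrow> h (f x) = g (h x)" using assms(2) unfolding fhom_def by auto
  have "equiv S (kern S h)"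
    unfolding equiv_def refl_on_def sym_def trans_def kern_def by auto
  moreover have "\<forall>x y. (x, y) \<in> kern S h \<longrightarrow> (f x, f y) \<in> kern S h"
    unfolding kern_def using fS hh by auto
  ultimately show ?thesis unfolding congs_def by auto
qed

lemma finite_congs: "finite S \<Longrightarrow> finite (congs S f)"
proof -
  assume "finite S"
  then have "finite (Pow (S \<times> S))" by simp
  moreover have "congs S f \<subseteq> Pow (S \<times> S)" unfolding congs_def using equiv_type by auto
  ultimately show ?thesis by (rule rev_finite_subset)
qed

lemma Id_in_congs: "fds S f \<Longrightarrow> Id_on S \<in> congs S f"
  unfolding congs_def fds_def equiv_def refl_on_def sym_def trans_def by auto

lemma kern_Id: "kern S h = Id_on S \<longleftrightarrow> inj_on h S"
  unfolding kern_def inj_on_def Id_on_def by auto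

lemma quot_fds: assumes "fds S f" "E \<in> congs S f" shows "fds (Rp E ` S) (Rp E \<circ> f)"
proof -
  have eq: "equiv S E" using assms(2) unfolding congs_def by auto
  have fS: "\<And>x. x \<in> S \<Longrightarrow> f x \<in> S" using assms(1) unfolding fds_def by auto
  have "finite S" using assms(1) unfolding fds_def by auto
  moreover have "\<And>r. r \<in> Rp E ` S \<Longrightarrow> Rp E (f r) \<in> Rp E ` S"
  proof -
    fix r assume "r \<in> Rp E ` S"
    then have "r \<in> S" using Rp_in[OF eq] by auto
    then show "Rp E (f r) \<in> Rp E ` S" using fS by auto
  qed
  ultimately show ?thesis unfolding fds_def by auto
qed

lemma quot_card: assumes "fds S f" "E \<in> congs S f" "E \<noteq> Id_on S"
  shows "card (Rp E ` S) < card S"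
proof -
  have eq: "equiv S E" using assms(2) unfolding congs_def by auto
  have fin: "finite S" using assms(1) unfolding fds_def by auto
  have ES: "E \<subseteq> S \<times> S" by (rule equiv_type[OF eq])
  have "Id_on S \<subseteq> E" using eq unfolding equiv_def refl_on_def by auto
  then obtain x y where xy: "(x, y) \<in> E" "x \<noteq> y" using assms(3) ES by auto
  then have "x \<in> S" "y \<in> S" using ES by auto
  moreover have "Rp E x = Rp E y" using Rp_eq[OF eq xy(1)] .
  ultimately have "\<not> inj_on (Rp E) S" using xy(2) unfolding inj_on_def by blast
  then have "card (Rp E ` S) \<noteq> card S" using inj_on_iff_eq_card[OF fin] by blast
  moreover have "card (Rp E ` S) \<le> card S" using card_image_le[OF fin] by blast
  ultimately show ?thesis by linarith
qed

lemma decomp: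
  assumes "fds S f" "fds T g"
  shows "card (fhom S f T g) = card (finjhom S f T g) +
     (\<Sum>E \<in> congs S f - {Id_on S}. card (finjhom (Rp E ` S) (Rp E \<circ> f) T g))"
proof -
  have finS: "finite S" and finT: "finite T" using assms unfolding fds_def by auto
  define F where "F E = {h \<in> fhom S f T g. kern S h = E}" for E
  have U: "fhom S f T g = (\<Union>E \<in> congs S f. F E)"
    unfolding F_def using kern_in_congs[OF assms(1)] by auto
  have "card (\<Union>E \<in> congs S f. F E) = (\<Sum>E \<in> congs S f. card (F E))"
  proof (rule card_UN_disjoint)
    show "finite (congs S f)" by (rule finite_congs[OF finS])
    show "\<forall>i\<in>congs S f. finite (F i)" unfolding F_def using finite_fhom[OF finS finT] by auto
    show "\<forall>i\<in>congs S f. \<forall>j\<in>congs S f. i \<noteq> j \<longrightarrow> F i \<inter> F j = {}" unfolding F_def by auto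
  qed
  also have "\<dots> = card (F (Id_on S)) + (\<Sum>E \<in> congs S f - {Id_on S}. card (F E))"
    using sum.remove[OF finite_congs[OF finS] Id_in_congs[OF assms(1)]] by blast
  also have "card (F (Id_on S)) = card (finjhom S f T g)"
    unfolding F_def finjhom_def kern_Id by simp
  also have "(\<Sum>E \<in> congs S f - {Id_on S}. card (F E)) =
     (\<Sum>E \<in> congs S f - {Id_on S}. card (finjhom (Rp E ` S) (Rp E \<circ> f) T g))"
  proof (rule sum.cong)
    fix E assume "E \<in> congs S f - {Id_on S}"
    then have "E \<in> congs S f" by simp
    show "card (F E) = card (finjhom (Rp E ` S) (Rp E \<circ> f) T g)"
      unfolding F_def by (rule bij_betw_same_card[OF fiber_bij[OF assms(1) \<open>E \<in> congs S f\<close>]])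
  qed simp
  finally show ?thesis using U by simp
qed

lemma inj_count:
  fixes T1 :: "'b set" and T2 :: "'c set"
  assumes H: "\<And>(S'::'x set) f'. fds S' f' \<Longrightarrow> card (fhom S' f' T1 g1) = card (fhom S' f' T2 g2)"
    and T1: "fds T1 g1" and T2: "fds T2 g2"
  shows "fds (S::'x set) f \<Longrightarrow> card (finjhom S f T1 g1) = card (finjhom S f T2 g2)"
proof (induction "card S" arbitrary: S f rule: less_induct)
  case less
  have "(\<Sum>E \<in> congs S f - {Id_on S}. card (finjhom (Rp E ` S) (Rp E \<circ> f) T1 g1)) =
        (\<Sum>E \<in> congs S f - {Id_on S}. card (finjhom (Rp E ` S) (Rp E \<circ> f) T2 g2))"
  proof (rule sum.cong)
    fix E assume E: "E \<in> congs S f - {Id_on S}"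
    show "card (finjhom (Rp E ` S) (Rp E \<circ> f) T1 g1) = card (finjhom (Rp E ` S) (Rp E \<circ> f) T2 g2)"
      using less.hyps[OF quot_card[OF less.prems, of E] quot_fds[OF less.prems, of E]] E by blast
  qed simp
  then show ?case using decomp[OF less.prems T1] decomp[OF less.prems T2] H[OF less.prems] by linarith
qed



lemma prod_count:
  assumes "finite X" "finite S" "finite T" "\<And>x. x \<in> X \<Longrightarrow> fx x \<in> X"
  shows "card (fhom X fx (S \<times> T) (map_prod f g)) = card (fhom X fx S f) * card (fhom X fx T g)"
proof -
  have "bij_betw (\<lambda>(h1, h2). restrict (\<lambda>x. (h1 x, h2 x)) X) (fhom X fx S f \<times> fhom X fx T g)
          (fhom X fx (S \<times> T) (map_prod f g))"
  proof (rule bij_betw_byWitness[where f' = "\<lambda>h. (restrict (fst \<circ> h) X, restrict (snd \<circ> h) X)"])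
    show "\<forall>a\<in>fhom X fx S f \<times> fhom X fx T g.
       (\<lambda>h. (restrict (fst \<circ> h) X, restrict (snd \<circ> h) X)) ((\<lambda>(h1, h2). restrict (\<lambda>x. (h1 x, h2 x)) X) a) = a"
    proof
      fix a assume a: "a \<in> fhom X fx S f \<times> fhom X fx T g"
      obtain h1 h2 where a': "a = (h1, h2)" by fastforce
      have e1: "h1 \<in> extensional X" and e2: "h2 \<in> extensional X" using a a' by (auto simp: fhom_def PiE_iff)
      have "restrict (fst \<circ> restrict (\<lambda>x. (h1 x, h2 x)) X) X = h1"
        using e1 by (auto simp: extensional_def)
      moreover have "restrict (snd \<circ> restrict (\<lambda>x. (h1 x, h2 x)) X) X = h2"
        using e2 by (auto simp: extensional_def)
      ultimately show "(\<lambda>h. (restrict (fst \<circ> h) X, restrict (snd \<circ> h) X)) ((\<lambda>(h1, h2). restrict (\<lambda>x. (h1 x, h2 x)) X) a) = a"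
        using a' by simp
    qed
    show "\<forall>h\<in>fhom X fx (S \<times> T) (map_prod f g).
       (\<lambda>(h1, h2). restrict (\<lambda>x. (h1 x, h2 x)) X) ((\<lambda>h. (restrict (fst \<circ> h) X, restrict (snd \<circ> h) X)) h) = h"
    proof
      fix h assume h: "h \<in> fhom X fx (S \<times> T) (map_prod f g)"
      then have e: "h \<in> extensional X" by (auto simp: fhom_def PiE_iff)
      show "(\<lambda>(h1, h2). restrict (\<lambda>x. (h1 x, h2 x)) X) ((\<lambda>h. (restrict (fst \<circ> h) X, restrict (snd \<circ> h) X)) h) = h"
        using e by (auto simp: extensional_def)
    qed
    show "(\<lambda>(h1, h2). restrict (\<lambda>x. (h1 x, h2 x)) X) ` (fhom X fx S f \<times> fhom X fx T g)
      \<subseteq> fhom X fx (S \<times> T) (map_prod f g)"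
      using assms(4) by (auto simp: fhom_def)
    show "(\<lambda>h. (restrict (fst \<circ> h) X, restrict (snd \<circ> h) X)) ` fhom X fx (S \<times> T) (map_prod f g)
      \<subseteq> fhom X fx S f \<times> fhom X fx T g"
    proof
      fix p assume "p \<in> (\<lambda>h. (restrict (fst \<circ> h) X, restrict (snd \<circ> h) X)) ` fhom X fx (S \<times> T) (map_prod f g)"
      then obtain h where h: "h \<in> fhom X fx (S \<times> T) (map_prod f g)"
        and p: "p = (restrict (fst \<circ> h) X, restrict (snd \<circ> h) X)" by auto
      have hS: "\<And>x. x \<in> X \<Longrightarrow> h x \<in> S \<times> T" using h by (auto simp: fhom_def)
      have hh: "\<And>x. x \<in> X \<Longrightarrow> h (fx x) = map_prod f g (h x)" using h by (auto simp: fhom_def)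
      have "\<And>x. x \<in> X \<Longrightarrow> fst (h (fx x)) = f (fst (h x)) \<and> snd (h (fx x)) = g (snd (h x))"
        using hh by (metis fst_map_prod snd_map_prod)
      then show "p \<in> fhom X fx S f \<times> fhom X fx T g"
        using hS p assms(4) unfolding fhom_def by (auto simp: mem_Times_iff)
    qed
  qed
  then have "card (fhom X fx S f \<times> fhom X fx T g) = card (fhom X fx (S \<times> T) (map_prod f g))"
    by (rule bij_betw_same_card)
  then show ?thesis by (simp add: card_cartesian_product)
qed

lemma iso_le:
  assumes "bij_betw p Sa Sb" "\<And>x. x \<in> Sa \<Longrightarrow> p (fa x) = fb (p x)" "finite X" "finite Sb" "\<And>x. x \<in> X \<Longrightarrow> fx x \<in> X"
  shows "card (fhom X fx Sa fa) \<le> card (fhom X fx Sb fb)"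
proof (rule card_inj_on_le[where f = "\<lambda>h. restrict (p \<circ> h) X"])
  show "finite (fhom X fx Sb fb)" by (rule finite_fhom[OF assms(3,4)])
  have pS: "\<And>x. x \<in> Sa \<Longrightarrow> p x \<in> Sb" using assms(1) by (auto simp: bij_betw_def)
  show "(\<lambda>h. restrict (p \<circ> h) X) ` fhom X fx Sa fa \<subseteq> fhom X fx Sb fb"
  proof
    fix k assume "k \<in> (\<lambda>h. restrict (p \<circ> h) X) ` fhom X fx Sa fa"
    then obtain h where h: "h \<in> fhom X fx Sa fa" and k: "k = restrict (p \<circ> h) X" by auto
    have hS: "\<And>x. x \<in> X \<Longrightarrow> h x \<in> Sa" using h by (auto simp: fhom_def)
    have hh: "\<And>x. x \<in> X \<Longrightarrow> h (fx x) = fa (h x)" using h by (auto simp: fhom_def)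
    show "k \<in> fhom X fx Sb fb"
      unfolding fhom_def
    proof (intro CollectI conjI ballI)
      show "k \<in> X \<rightarrow>\<^sub>E Sb" using k hS pS by auto
    next
      fix x assume x: "x \<in> X"
      have "k (fx x) = p (h (fx x))" using k assms(5)[OF x] by simp
      also have "\<dots> = p (fa (h x))" using hh[OF x] by simp
      also have "\<dots> = fb (p (h x))" using assms(2)[OF hS[OF x]] .
      finally show "k (fx x) = fb (k x)" using k x by simp
    qed
  qed
  show "inj_on (\<lambda>h. restrict (p \<circ> h) X) (fhom X fx Sa fa)"
  proof
    fix h1 h2 assume h: "h1 \<in> fhom X fx Sa fa" "h2 \<in> fhom X fx Sa fa"
      and eq: "restrict (p \<circ> h1) X = restrict (p \<circ> h2) X"
    have pi: "inj_on p Sa" using assms(1) by (simp add: bij_betw_def)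
    show "h1 = h2"
    proof
      fix x show "h1 x = h2 x"
      proof (cases "x \<in> X")
        case True
        then have "p (h1 x) = p (h2 x)" using fun_cong[OF eq, of x] by simp
        moreover have "h1 x \<in> Sa" "h2 x \<in> Sa" using h True by (auto simp: fhom_def)
        ultimately show ?thesis using pi by (auto dest: inj_onD)
      next
        case False
        then show ?thesis using h by (auto simp: fhom_def PiE_iff extensional_def)
      qed
    qed
  qed
qed



lemma iso_sym:
  assumes "fds S f" "bij_betw p S T" "\<And>x. x \<in> S \<Longrightarrow> p (f x) = g (p x)"
  shows "bij_betw (the_inv_into S p) T S \<and> (\<forall>y\<in>T. the_inv_into S p (g y) = f (the_inv_into S p y))"
proof
  show b: "bij_betw (the_inv_into S p) T S" by (rule bij_betw_the_inv_into[OF assms(2)])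
  have pi: "inj_on p S" and pT: "p ` S = T" using assms(2) by (auto simp: bij_betw_def)
  have fS: "\<And>x. x \<in> S \<Longrightarrow> f x \<in> S" using assms(1) unfolding fds_def by auto
  show "\<forall>y\<in>T. the_inv_into S p (g y) = f (the_inv_into S p y)"
  proof
    fix y assume "y \<in> T"
    then obtain x where x: "x \<in> S" "y = p x" using pT by auto
    have "the_inv_into S p (g y) = the_inv_into S p (p (f x))" using assms(3)[OF x(1)] x(2) by simp
    also have "\<dots> = f x" using the_inv_into_f_f[OF pi fS[OF x(1)]] .
    also have "\<dots> = f (the_inv_into S p y)" using the_inv_into_f_f[OF pi x(1)] x(2) by simp
    finally show "the_inv_into S p (g y) = f (the_inv_into S p y)" .
  qed
qed

lemma fds_prod_fds: "fds S f \<Longrightarrow> fds T g \<Longrightarrow> fds (S \<times> T) (map_prod f g)"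
  unfolding fds_def by auto

lemma hom_nonempty:
  assumes "s \<in> T" "g s = s" "\<And>x. x \<in> X \<Longrightarrow> fx x \<in> X"
  shows "restrict (\<lambda>_. s) X \<in> fhom X fx T g"
  using assms unfolding fhom_def by auto

lemma hom_cancel:
  fixes SA :: "'a set" and SB :: "'b set" and SC :: "'c set" and X :: "'x set"
  assumes "fds SA A" "fds SB B" "fds SC C" "s \<in> SA" "A s = s"
    and p: "bij_betw p (SA \<times> SB) (SA \<times> SC)"
    and pc: "\<And>z. z \<in> SA \<times> SB \<Longrightarrow> p (map_prod A B z) = map_prod A C (p z)"
    and X: "fds X fx"
  shows "card (fhom X fx SB B) = card (fhom X fx SC C)"
proof -
  have fin: "finite SA" "finite SB" "finite SC" "finite X" using assms unfolding fds_def by auto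
  have fx: "\<And>x. x \<in> X \<Longrightarrow> fx x \<in> X" using X unfolding fds_def by auto
  have P1: "fds (SA \<times> SB) (map_prod A B)" by (rule fds_prod_fds[OF assms(1,2)])
  have P2: "fds (SA \<times> SC) (map_prod A C)" by (rule fds_prod_fds[OF assms(1,3)])
  have le1: "card (fhom X fx (SA \<times> SB) (map_prod A B)) \<le> card (fhom X fx (SA \<times> SC) (map_prod A C))"
    by (rule iso_le[where fa="map_prod A B" and fb="map_prod A C" and p=p]) (use p pc fin fx in auto)
  have s: "bij_betw (the_inv_into (SA \<times> SB) p) (SA \<times> SC) (SA \<times> SB)"
    "\<forall>y\<in>SA \<times> SC. the_inv_into (SA \<times> SB) p (map_prod A C y) = map_prod A B (the_inv_into (SA \<times> SB) p y)"
    using iso_sym[OF P1 p pc] by auto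
  have le2: "card (fhom X fx (SA \<times> SC) (map_prod A C)) \<le> card (fhom X fx (SA \<times> SB) (map_prod A B))"
    by (rule iso_le[where fb="map_prod A B" and fa="map_prod A C" and p="the_inv_into (SA \<times> SB) p"]) (use s fin fx in auto)
  have "card (fhom X fx SA A) * card (fhom X fx SB B) = card (fhom X fx SA A) * card (fhom X fx SC C)"
    using le1 le2 prod_count[where fx=fx and f=A and g=B, OF fin(4,1,2) fx] prod_count[where fx=fx and f=A and g=C, OF fin(4,1,3) fx] by linarith
  moreover have "card (fhom X fx SA A) \<noteq> 0"
    using hom_nonempty[where g=A and fx=fx and X=X, OF assms(4,5) fx] finite_fhom[OF fin(4,1)] by (metis card_0_eq empty_iff)
  ultimately show ?thesis by simp
qed

theorem mainTheorem12:
  fixes SA :: "'a set" and A :: "'a \<Rightarrow> 'a"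
    and SB :: "'b set" and B :: "'b \<Rightarrow> 'b"
    and SC :: "'c set" and C :: "'c \<Rightarrow> 'c"
  assumes "dendron SA A" and "dendron SB B" and "dendron SC C"
    and "fds_iso (fds_prod_set SA SB) (fds_prod A B) (fds_prod_set SA SC) (fds_prod A C)"
  shows "fds_iso SB B SC C"
proof -
  have fA: "fds SA A" and fB: "fds SB B" and fC: "fds SC C" using assms(1-3) unfolding dendron_def by auto
  obtain s where s: "s \<in> SA" "A s = s" using assms(1) unfolding dendron_def by auto
  obtain p where p: "bij_betw p (SA \<times> SB) (SA \<times> SC)"
    and pc: "\<And>z. z \<in> SA \<times> SB \<Longrightarrow> p (map_prod A B z) = map_prod A C (p z)"
    using assms(4) unfolding fds_iso_def fds_prod_set_def fds_prod_def by auto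
  note HC = hom_cancel[OF fA fB fC s p pc]
  have finB: "finite SB" and finC: "finite SC" using fB fC unfolding fds_def by auto
  have BB: "card (finjhom SB B SB B) = card (finjhom SB B SC C)"
    by (rule inj_count[OF HC fB fC fB])
  have CC: "card (finjhom SC C SB B) = card (finjhom SC C SC C)"
    by (rule inj_count[OF HC fB fC fC])
  have idB: "restrict id SB \<in> finjhom SB B SB B" using fB unfolding finjhom_def fhom_def fds_def by auto
  have idC: "restrict id SC \<in> finjhom SC C SC C" using fC unfolding finjhom_def fhom_def fds_def by auto
  have "card (finjhom SB B SB B) \<noteq> 0"
    using idB finite_finjhom[OF finB finB, of B B] by (metis card_0_eq empty_iff)
  then have "finjhom SB B SC C \<noteq> {}" using BB by (metis card.empty)
  then obtain h1 where h1: "h1 \<in> finjhom SB B SC C" by auto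
  have "card (finjhom SC C SC C) \<noteq> 0"
    using idC finite_finjhom[OF finC finC, of C C] by (metis card_0_eq empty_iff)
  then have "finjhom SC C SB B \<noteq> {}" using CC by (metis card.empty)
  then obtain h2 where h2: "h2 \<in> finjhom SC C SB B" by auto
  have h1i: "inj_on h1 SB" and h1S: "h1 ` SB \<subseteq> SC" and h1h: "\<forall>x\<in>SB. h1 (B x) = C (h1 x)"
    using h1 unfolding finjhom_def fhom_def by auto
  have h2i: "inj_on h2 SC" and h2S: "h2 ` SC \<subseteq> SB"
    using h2 unfolding finjhom_def fhom_def by auto
  have "card SB \<le> card SC" by (rule card_inj_on_le[OF h1i h1S finC])
  moreover have "card SC \<le> card SB" by (rule card_inj_on_le[OF h2i h2S finB])
  ultimately have "card (h1 ` SB) = card SC" using card_image[OF h1i] by simp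
  then have "h1 ` SB = SC" using card_subset_eq[OF finC h1S] by simp
  then have "bij_betw h1 SB SC" using h1i by (simp add: bij_betw_def)
  then show ?thesis unfolding fds_iso_def using h1h by blast
qed

end
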